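(* The function $$u(z)=-8\frac{(1-|z|^2)^4}{|1-z|^2}+\frac{3}{2}\frac{(1-|z|^2)^4}{|1-z|^4}-6\frac{(1-|z|^2)^5}{|1-z|^4}-3\frac{(1-|z|^2)^5}{|1-z|^6}+\frac{(1-|z|^2)^7}{|1-z|^8},\quad z\in\mathbb{D},$$ is $w_2$-biharmonic in $\mathbb{D}$, i.e. $\Delta\big((1-|z|^2)^{-2}\Delta u\big)=0$ in $\mathbb{D}$.
   Context: $\mathbb{D}$ is the open unit disc and $\Delta=\partial^2/\partial z\partial\bar z$. The weight is $w_2(z)=(1-|z|^2)^2$, and $u$ is called $w_2$-biharmonic if $\Delta w_2^{-1}\Delta u=0$ in $\mathbb{D}$. *)

theory Defs
  imports "HOL-Analysis.Analysis"
begin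

text \<open>Partial derivatives in x = Re z and y = Im z of a real-valued function on the
  complex plane, and the Laplacian normalised as
  Delta = d^2/(dz d conj z) = (1/4)(d^2/dx^2 + d^2/dy^2).\<close>

definition pdx :: "(complex \<Rightarrow> real) \<Rightarrow> complex \<Rightarrow> real" where
  "pdx f z = deriv (\<lambda>t::real. f (z + complex_of_real t)) 0"

definition pdy :: "(complex \<Rightarrow> real) \<Rightarrow> complex \<Rightarrow> real" where
  "pdy f z = deriv (\<lambda>t::real. f (z + \<i> * complex_of_real t)) 0"

definition wlap :: "(complex \<Rightarrow> real) \<Rightarrow> complex \<Rightarrow> real" where
  "wlap f z = (pdx (pdx f) z + pdy (pdy f) z) / 4"

definition w2 :: "complex \<Rightarrow> real" where
  "w2 z = (1 - (cmod z)^2)^2"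

definition w2_biharmonic :: "(complex \<Rightarrow> real) \<Rightarrow> bool" where
  "w2_biharmonic u \<longleftrightarrow>
     (\<forall>z \<in> ball 0 1. wlap (\<lambda>\<zeta>. wlap u \<zeta> / w2 \<zeta>) z = 0)"

end

theory Submission
  imports Defs
begin


definition sS :: "real \<Rightarrow> real \<Rightarrow> real" where "sS x y = 1 - x^2 - y^2"
definition qQ :: "real \<Rightarrow> real \<Rightarrow> real" where "qQ x y = (1 - x)^2 + y^2"
definition PP :: "real \<Rightarrow> real \<Rightarrow> real \<Rightarrow> real \<Rightarrow> real" where
  "PP a b x y = sS x y powr a * qQ x y powr (- b)"
definition Px where "Px a b x y = -2*a*x*PP (a-1) b x y + 2*b*(1-x)*PP a (b+1) x y"
definition Py where "Py a b x y = -2*a*y*PP (a-1) b x y - 2*b*y*PP a (b+1) x y"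
definition Pxx where "Pxx a b x y = -2*a*PP (a-1) b x y - 2*a*x*Px (a-1) b x y
   - 2*b*PP a (b+1) x y + 2*b*(1-x)*Px a (b+1) x y"
definition Pyy where "Pyy a b x y = -2*a*PP (a-1) b x y - 2*a*y*Py (a-1) b x y
   - 2*b*PP a (b+1) x y - 2*b*y*Py a (b+1) x y"

lemma dPx:
  assumes "sS x y > 0" "qQ x y > 0"
  shows "((\<lambda>x. PP a b x y) has_real_derivative Px a b x y) (at x)"
proof -
  have e: "- b - 1 = - 1 - (b::real)" by simp
  have "((\<lambda>x. (1 - x^2 - y^2) powr a * ((1 - x)^2 + y^2) powr (- b)) has_real_derivative
     a * (1 - x^2 - y^2) powr (a - 1) * (- (2 * x)) * ((1 - x)^2 + y^2) powr (- b)
     + (1 - x^2 - y^2) powr a * ((- b) * ((1 - x)^2 + y^2) powr (- (b + 1)) * (- 2 * (1 - x)))) (at x)"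
    using assms unfolding sS_def qQ_def
    by (auto intro!: derivative_eq_intros simp: algebra_simps e)
  then show ?thesis unfolding Px_def PP_def sS_def qQ_def
    by (simp add: algebra_simps e)
qed

lemma dPy:
  assumes "sS x y > 0" "qQ x y > 0"
  shows "((\<lambda>y. PP a b x y) has_real_derivative Py a b x y) (at y)"
proof -
  have e: "- b - 1 = - 1 - (b::real)" by simp
  have "((\<lambda>y. (1 - x^2 - y^2) powr a * ((1 - x)^2 + y^2) powr (- b)) has_real_derivative
     a * (1 - x^2 - y^2) powr (a - 1) * (- (2 * y)) * ((1 - x)^2 + y^2) powr (- b)
     + (1 - x^2 - y^2) powr a * ((- b) * ((1 - x)^2 + y^2) powr (- (b + 1)) * (2 * y))) (at y)"
    using assms unfolding sS_def qQ_def
    by (auto intro!: derivative_eq_intros simp: algebra_simps e)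
  then show ?thesis unfolding Py_def PP_def sS_def qQ_def
    by (simp add: algebra_simps e)
qed

lemma dPxx:
  assumes "sS x y > 0" "qQ x y > 0"
  shows "((\<lambda>x. Px a b x y) has_real_derivative Pxx a b x y) (at x)"
proof -
  have "((\<lambda>x. -2*a*x*PP (a-1) b x y + 2*b*(1-x)*PP a (b+1) x y) has_real_derivative Pxx a b x y) (at x)"
    unfolding Pxx_def by (auto intro!: derivative_eq_intros dPx[OF assms] simp: algebra_simps)
  thus ?thesis by (simp add: Px_def)
qed

lemma dPyy:
  assumes "sS x y > 0" "qQ x y > 0"
  shows "((\<lambda>y. Py a b x y) has_real_derivative Pyy a b x y) (at y)"
proof -
  have "((\<lambda>y. -2*a*y*PP (a-1) b x y - 2*b*y*PP a (b+1) x y) has_real_derivative Pyy a b x y) (at y)"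
    unfolding Pyy_def by (auto intro!: derivative_eq_intros dPy[OF assms] simp: algebra_simps)
  thus ?thesis by (simp add: Py_def)
qed

lemma PP_shift:
  assumes "sS x y > 0" "qQ x y > 0"
  shows "PP c' d' x y = sS x y powr (c' - c) * qQ x y powr (d - d') * PP c d x y"
proof -
  have "sS x y powr c * sS x y powr (c'-c) = sS x y powr c'" by (simp add: powr_add[symmetric])
  moreover have "qQ x y powr (-d) * qQ x y powr (d-d') = qQ x y powr (-d')" by (simp add: powr_add[symmetric])
  ultimately show ?thesis unfolding PP_def by (metis mult.assoc mult.commute)
qed

lemma lapP:
  assumes S: "sS x y > 0" and Q: "qQ x y > 0"
  shows "(Pxx a b x y + Pyy a b x y) / 4 =
     a*(a-1)*PP (a-2) b x y - a*(a-b)*PP (a-1) b x y + b*(b-a)*PP a (b+1) x y"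
proof -
  let ?B = "PP (a-2) b x y"
  let ?S = "sS x y" let ?Q = "qQ x y"
  have 0: "PP (a-1-1) b x y = ?B" by simp
  have 1: "PP (a-1) b x y = ?S * ?B" using PP_shift[OF S Q, of "a-1" b "a-2" b] S Q by simp
  have 2: "PP (a-1) (b+1) x y = ?S / ?Q * ?B" using PP_shift[OF S Q, of "a-1" "b+1" "a-2" b] S Q
    by (simp add: powr_minus_divide)
  have 3: "PP a (b+1) x y = ?S^2 / ?Q * ?B" using PP_shift[OF S Q, of "a" "b+1" "a-2" b] S Q
    by (simp add: powr_minus_divide)
  have 4: "PP a (b+2) x y = ?S^2 / ?Q^2 * ?B" using PP_shift[OF S Q, of "a" "b+2" "a-2" b] S Q
    by (simp add: powr_minus_divide)
  have 5: "PP a (b+1+1) x y = ?S^2 / ?Q^2 * ?B" using 4 by (simp add: add.assoc)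
  show ?thesis
    unfolding Pxx_def Pyy_def Px_def Py_def 0 1 2 3 5
    using Q
    apply (simp add: field_simps)
    apply (simp add: sS_def qQ_def)
    apply algebra
    done
qed

definition tT :: "real \<Rightarrow> real \<Rightarrow> complex \<Rightarrow> real" where
  "tT a b w = PP a b (Re w) (Im w)"

lemma sS_cmod: "sS (Re w) (Im w) = 1 - (cmod w)^2"
  by (simp add: sS_def cmod_power2)
lemma qQ_cmod: "qQ (Re w) (Im w) = (cmod (1 - w))^2"
  by (simp add: qQ_def cmod_power2)

lemma inball:
  assumes "w \<in> ball (0::complex) 1"
  shows "sS (Re w) (Im w) > 0" "qQ (Re w) (Im w) > 0"
proof -
  have c: "cmod w < 1" using assms by simp
  then show "sS (Re w) (Im w) > 0" unfolding sS_cmod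
    by (metis abs_norm_cancel abs_square_less_1 diff_gt_0_iff_gt)
  have "Re w < 1" using c abs_Re_le_cmod[of w] by linarith
  then show "qQ (Re w) (Im w) > 0" unfolding qQ_def
    by (smt (verit) zero_le_power2 zero_less_power)
qed

lemma ev_ball:
  assumes "w \<in> ball (0::complex) 1"
  shows "eventually (\<lambda>t::real. w + complex_of_real t \<in> ball 0 1) (nhds 0)"
    "eventually (\<lambda>t::real. w + \<i> * complex_of_real t \<in> ball 0 1) (nhds 0)"
proof -
  have d: "1 - cmod w > 0" using assms by simp
  show "eventually (\<lambda>t::real. w + complex_of_real t \<in> ball 0 1) (nhds 0)"
    unfolding eventually_nhds_metric
  proof (intro exI conjI allI impI)
    show "1 - cmod w > 0" by (fact d)
    fix t :: real assume "dist t 0 < 1 - cmod w"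
    then have "abs t < 1 - cmod w" by simp
    moreover have "cmod (w + complex_of_real t) \<le> cmod w + abs t"
      using norm_triangle_ineq[of w "complex_of_real t"] by simp
    ultimately show "w + complex_of_real t \<in> ball 0 1" by simp
  qed
  show "eventually (\<lambda>t::real. w + \<i> * complex_of_real t \<in> ball 0 1) (nhds 0)"
    unfolding eventually_nhds_metric
  proof (intro exI conjI allI impI)
    show "1 - cmod w > 0" by (fact d)
    fix t :: real assume "dist t 0 < 1 - cmod w"
    then have "abs t < 1 - cmod w" by simp
    moreover have "cmod (w + \<i> * complex_of_real t) \<le> cmod w + abs t"
      using norm_triangle_ineq[of w "\<i> * complex_of_real t"] by (simp add: norm_mult)
    ultimately show "w + \<i> * complex_of_real t \<in> ball 0 1" by simp
  qed
qed

definition LAPR :: "(complex \<Rightarrow> real) \<Rightarrow> (complex \<Rightarrow> real) \<Rightarrow> bool" where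
  "LAPR f F \<longleftrightarrow> (\<exists>fx fy fxx fyy. \<forall>w\<in>ball 0 1.
     ((\<lambda>t. f (w + complex_of_real t)) has_real_derivative fx w) (at 0) \<and>
     ((\<lambda>t. f (w + \<i> * complex_of_real t)) has_real_derivative fy w) (at 0) \<and>
     ((\<lambda>t. fx (w + complex_of_real t)) has_real_derivative fxx w) (at 0) \<and>
     ((\<lambda>t. fy (w + \<i> * complex_of_real t)) has_real_derivative fyy w) (at 0) \<and>
     F w = (fxx w + fyy w) / 4)"

lemma LAPR_wlap:
  assumes "LAPR f F" "w \<in> ball 0 1"
  shows "wlap f w = F w"
proof -
  obtain fx fy fxx fyy where H: "\<forall>w\<in>ball 0 1.
     ((\<lambda>t. f (w + complex_of_real t)) has_real_derivative fx w) (at 0) \<and>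
     ((\<lambda>t. f (w + \<i> * complex_of_real t)) has_real_derivative fy w) (at 0) \<and>
     ((\<lambda>t. fx (w + complex_of_real t)) has_real_derivative fxx w) (at 0) \<and>
     ((\<lambda>t. fy (w + \<i> * complex_of_real t)) has_real_derivative fyy w) (at 0) \<and>
     F w = (fxx w + fyy w) / 4" using assms(1) unfolding LAPR_def by blast
  have px: "pdx f v = fx v" if "v \<in> ball 0 1" for v
    using H that unfolding pdx_def by (blast intro: DERIV_imp_deriv)
  have py: "pdy f v = fy v" if "v \<in> ball 0 1" for v
    using H that unfolding pdy_def by (blast intro: DERIV_imp_deriv)
  have "pdx (pdx f) w = deriv (\<lambda>t. fx (w + complex_of_real t)) 0"
    unfolding pdx_def[of "pdx f"]
    by (rule deriv_cong_ev[OF eventually_mono[OF ev_ball(1)[OF assms(2)]]]) (auto simp: px)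
  also have "\<dots> = fxx w" using H assms(2) by (blast intro: DERIV_imp_deriv)
  finally have 1: "pdx (pdx f) w = fxx w" .
  have "pdy (pdy f) w = deriv (\<lambda>t. fy (w + \<i> * complex_of_real t)) 0"
    unfolding pdy_def[of "pdy f"]
    by (rule deriv_cong_ev[OF eventually_mono[OF ev_ball(2)[OF assms(2)]]]) (auto simp: py)
  also have "\<dots> = fyy w" using H assms(2) by (blast intro: DERIV_imp_deriv)
  finally have 2: "pdy (pdy f) w = fyy w" .
  show ?thesis unfolding wlap_def 1 2 using H assms(2) by simp
qed

lemma LAPR_cong:
  assumes "LAPR f F" "\<And>w. w \<in> ball 0 1 \<Longrightarrow> g w = f w"
  shows "LAPR g F"
proof -
  obtain fx fy fxx fyy where H: "\<forall>w\<in>ball 0 1.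
     ((\<lambda>t. f (w + complex_of_real t)) has_real_derivative fx w) (at 0) \<and>
     ((\<lambda>t. f (w + \<i> * complex_of_real t)) has_real_derivative fy w) (at 0) \<and>
     ((\<lambda>t. fx (w + complex_of_real t)) has_real_derivative fxx w) (at 0) \<and>
     ((\<lambda>t. fy (w + \<i> * complex_of_real t)) has_real_derivative fyy w) (at 0) \<and>
     F w = (fxx w + fyy w) / 4" using assms(1) unfolding LAPR_def by blast
  have "\<forall>w\<in>ball 0 1.
     ((\<lambda>t. g (w + complex_of_real t)) has_real_derivative fx w) (at 0) \<and>
     ((\<lambda>t. g (w + \<i> * complex_of_real t)) has_real_derivative fy w) (at 0)"
  proof
    fix w :: complex assume w: "w \<in> ball 0 1"
    have "((\<lambda>t. g (w + complex_of_real t)) has_real_derivative fx w) (at 0) \<longleftrightarrow>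
          ((\<lambda>t. f (w + complex_of_real t)) has_real_derivative fx w) (at 0)"
      by (rule DERIV_cong_ev[OF refl eventually_mono[OF ev_ball(1)[OF w]] refl]) (simp add: assms(2))
    moreover have "((\<lambda>t. g (w + \<i> * complex_of_real t)) has_real_derivative fy w) (at 0) \<longleftrightarrow>
          ((\<lambda>t. f (w + \<i> * complex_of_real t)) has_real_derivative fy w) (at 0)"
      by (rule DERIV_cong_ev[OF refl eventually_mono[OF ev_ball(2)[OF w]] refl]) (simp add: assms(2))
    ultimately show "((\<lambda>t. g (w + complex_of_real t)) has_real_derivative fx w) (at 0) \<and>
     ((\<lambda>t. g (w + \<i> * complex_of_real t)) has_real_derivative fy w) (at 0)"
      using H w by blast
  qed
  then show ?thesis using H unfolding LAPR_def by blast
qed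

lemma LAPR_zero: "LAPR (\<lambda>w. 0) (\<lambda>w. 0)"
  unfolding LAPR_def
  by (rule exI[of _ "\<lambda>w. 0"])+ auto

lemma LAPR_lin:
  assumes "LAPR f F" "LAPR g G"
  shows "LAPR (\<lambda>w. c * f w + g w) (\<lambda>w. c * F w + G w)"
proof -
  obtain fx fy fxx fyy where H: "\<forall>w\<in>ball 0 1.
     ((\<lambda>t. f (w + complex_of_real t)) has_real_derivative fx w) (at 0) \<and>
     ((\<lambda>t. f (w + \<i> * complex_of_real t)) has_real_derivative fy w) (at 0) \<and>
     ((\<lambda>t. fx (w + complex_of_real t)) has_real_derivative fxx w) (at 0) \<and>
     ((\<lambda>t. fy (w + \<i> * complex_of_real t)) has_real_derivative fyy w) (at 0) \<and>
     F w = (fxx w + fyy w) / 4" using assms(1) unfolding LAPR_def by blast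
  obtain gx gy gxx gyy where G: "\<forall>w\<in>ball 0 1.
     ((\<lambda>t. g (w + complex_of_real t)) has_real_derivative gx w) (at 0) \<and>
     ((\<lambda>t. g (w + \<i> * complex_of_real t)) has_real_derivative gy w) (at 0) \<and>
     ((\<lambda>t. gx (w + complex_of_real t)) has_real_derivative gxx w) (at 0) \<and>
     ((\<lambda>t. gy (w + \<i> * complex_of_real t)) has_real_derivative gyy w) (at 0) \<and>
     G w = (gxx w + gyy w) / 4" using assms(2) unfolding LAPR_def by blast
  show ?thesis unfolding LAPR_def
  proof (rule exI[of _ "\<lambda>w. c * fx w + gx w"], rule exI[of _ "\<lambda>w. c * fy w + gy w"],
     rule exI[of _ "\<lambda>w. c * fxx w + gxx w"], rule exI[of _ "\<lambda>w. c * fyy w + gyy w"], intro ballI conjI)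
    fix w :: complex assume w: "w \<in> ball 0 1"
    note h = H[rule_format, OF w] and g = G[rule_format, OF w]
    show "((\<lambda>t. c * f (w + complex_of_real t) + g (w + complex_of_real t)) has_real_derivative c * fx w + gx w) (at 0)"
      using h g by (intro DERIV_add DERIV_cmult) auto
    show "((\<lambda>t. c * f (w + \<i> * complex_of_real t) + g (w + \<i> * complex_of_real t)) has_real_derivative c * fy w + gy w) (at 0)"
      using h g by (intro DERIV_add DERIV_cmult) auto
    show "((\<lambda>t. (\<lambda>w. c * fx w + gx w) (w + complex_of_real t)) has_real_derivative (\<lambda>w. c * fxx w + gxx w) w) (at 0)"
      using h g by (auto intro!: DERIV_add DERIV_cmult)
    show "((\<lambda>t. (\<lambda>w. c * fy w + gy w) (w + \<i> * complex_of_real t)) has_real_derivative (\<lambda>w. c * fyy w + gyy w) w) (at 0)"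
      using h g by (auto intro!: DERIV_add DERIV_cmult)
    show "c * F w + G w = ((\<lambda>w. c * fxx w + gxx w) w + (\<lambda>w. c * fyy w + gyy w) w) / 4"
      using h g by (simp add: field_simps)
  qed
qed

lemma shift0:
  assumes "(f has_real_derivative D) (at x)"
  shows "((\<lambda>t. f (x + t)) has_real_derivative D) (at 0)"
  using DERIV_shift[of f D 0 x] assms by (simp add: add.commute)

definition lapT where
  "lapT a b w = a*(a-1)*tT (a-2) b w + (- (a*(a-b)) * tT (a-1) b w + (b*(b-a)*tT a (b+1) w + 0))"

lemma LAPR_T: "LAPR (tT a b) (lapT a b)"
  unfolding LAPR_def
proof (intro exI ballI conjI)
  fix w :: complex assume w: "w \<in> ball 0 1"
  note p = inball[OF w]
  show "((\<lambda>t. tT a b (w + complex_of_real t)) has_real_derivative Px a b (Re w) (Im w)) (at 0)"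
    using shift0[OF dPx[OF p, of a b]]
    by (simp add: tT_def add.commute)
  show "((\<lambda>t. tT a b (w + \<i> * complex_of_real t)) has_real_derivative Py a b (Re w) (Im w)) (at 0)"
    using shift0[OF dPy[OF p, of a b]]
    by (simp add: tT_def add.commute)
  show "((\<lambda>t. (\<lambda>w. Px a b (Re w) (Im w)) (w + complex_of_real t)) has_real_derivative Pxx a b (Re w) (Im w)) (at 0)"
    using shift0[OF dPxx[OF p, of a b]]
    by (simp add: add.commute)
  show "((\<lambda>t. (\<lambda>w. Py a b (Re w) (Im w)) (w + \<i> * complex_of_real t)) has_real_derivative Pyy a b (Re w) (Im w)) (at 0)"
    using shift0[OF dPyy[OF p, of a b]]
    by (simp add: add.commute)
  show "lapT a b w = ((\<lambda>w. Pxx a b (Re w) (Im w)) w + (\<lambda>w. Pyy a b (Re w) (Im w)) w) / 4"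
    using lapP[OF p, of a b] by (simp add: lapT_def tT_def)
qed

definition lapT2 where
  "lapT2 a b w = a*(a-1)*tT (a-4) b w + (- (a*(a-b)) * tT (a-3) b w + (b*(b-a)*tT (a-2) (b+1) w + 0))"
definition lapW where
  "lapW a b w = a*(a-1)*lapT (a-4) b w + (- (a*(a-b)) * lapT (a-3) b w + (b*(b-a)*lapT (a-2) (b+1) w + 0))"

lemma LAPR_T2: "LAPR (lapT2 a b) (lapW a b)"
proof -
  have e1: "lapT2 a b = (\<lambda>w. a*(a-1)*tT (a-4) b w + (- (a*(a-b)) * tT (a-3) b w + (b*(b-a)*tT (a-2) (b+1) w + 0)))"
    by (rule ext) (simp add: lapT2_def)
  have e2: "lapW a b = (\<lambda>w. a*(a-1)*lapT (a-4) b w + (- (a*(a-b)) * lapT (a-3) b w + (b*(b-a)*lapT (a-2) (b+1) w + 0)))"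
    by (rule ext) (simp add: lapW_def)
  show ?thesis unfolding e1 e2 by (intro LAPR_lin LAPR_T LAPR_zero)
qed

lemma w2_sS: "w2 w = (sS (Re w) (Im w))^2"
  by (simp add: w2_def sS_cmod)

lemma tT_div:
  assumes w: "w \<in> ball 0 1"
  shows "tT p q w / w2 w = tT (p-2) q w"
proof -
  note pp = inball[OF w]
  have "tT (p-2) q w = sS (Re w) (Im w) powr (-2) * tT p q w"
    using PP_shift[OF pp, of "p-2" q p q] pp unfolding tT_def by simp
  then show ?thesis using pp by (simp add: w2_sS powr_minus_divide)
qed

lemma lapT_div:
  assumes w: "w \<in> ball 0 1"
  shows "c * lapT a b w / w2 w = c * lapT2 a b w"
proof -
  have h1: "tT (a-4) b w = tT (a-2) b w / w2 w" using tT_div[OF w, of "a-2" b] by simp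
  have h2: "tT (a-3) b w = tT (a-1) b w / w2 w" using tT_div[OF w, of "a-1" b] by simp
  have h3: "tT (a-2) (b+1) w = tT a (b+1) w / w2 w" using tT_div[OF w, of "a" "b+1"] by simp
  have nz: "w2 w \<noteq> 0" using inball[OF w] by (simp add: w2_sS)
  show ?thesis unfolding lapT_def lapT2_def h1 h2 h3 using nz by (simp add: field_simps)
qed

lemma tT_nat:
  assumes w: "w \<in> ball 0 1"
  shows "tT (real n) (real m) w = (1 - (cmod w)^2)^n / (cmod (1 - w))^(2*m)"
proof -
  note pp = inball[OF w]
  show ?thesis using pp unfolding tT_def PP_def
    by (simp add: powr_minus_divide powr_realpow sS_cmod qQ_cmod power_mult)
qed

theorem proposition3p2:
  fixes u :: "complex \<Rightarrow> real"
  defines "u \<equiv> \<lambda>z. - 8 * (1 - (cmod z)^2)^4 / (cmod (1 - z))^2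
                 + 3/2 * (1 - (cmod z)^2)^4 / (cmod (1 - z))^4
                 - 6 * (1 - (cmod z)^2)^5 / (cmod (1 - z))^4
                 - 3 * (1 - (cmod z)^2)^5 / (cmod (1 - z))^6
                 + (1 - (cmod z)^2)^7 / (cmod (1 - z))^8"
  shows "w2_biharmonic u"
proof -
  define U where "U = (\<lambda>w. (-8) * tT 4 1 w + (3/2 * tT 4 2 w + ((-6) * tT 5 2 w
      + ((-3) * tT 5 3 w + (1 * tT 7 4 w + 0)))))"
  define L1 where "L1 = (\<lambda>w. (-8) * lapT 4 1 w + (3/2 * lapT 4 2 w + ((-6) * lapT 5 2 w
      + ((-3) * lapT 5 3 w + (1 * lapT 7 4 w + 0)))))"
  define V where "V = (\<lambda>w. (-8) * lapT2 4 1 w + (3/2 * lapT2 4 2 w + ((-6) * lapT2 5 2 w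
      + ((-3) * lapT2 5 3 w + (1 * lapT2 7 4 w + 0)))))"
  define W where "W = (\<lambda>w. (-8) * lapW 4 1 w + (3/2 * lapW 4 2 w + ((-6) * lapW 5 2 w
      + ((-3) * lapW 5 3 w + (1 * lapW 7 4 w + 0)))))"
  have LU: "LAPR U L1" unfolding U_def L1_def by (intro LAPR_lin LAPR_T LAPR_zero)
  have LV: "LAPR V W" unfolding V_def W_def by (intro LAPR_lin LAPR_T2 LAPR_zero)
  have uU: "u w = U w" if w: "w \<in> ball 0 1" for w
    using tT_nat[OF w, of 4 1] tT_nat[OF w, of 4 2] tT_nat[OF w, of 5 2] tT_nat[OF w, of 5 3]
      tT_nat[OF w, of 7 4]
    unfolding u_def U_def by simp
  have Lu: "LAPR u L1" by (rule LAPR_cong[OF LU uU])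
  have g: "wlap u w / w2 w = V w" if w: "w \<in> ball 0 1" for w
    unfolding LAPR_wlap[OF Lu w] L1_def V_def
    by (simp only: add_divide_distrib lapT_div[OF w] div_0)
  have Lg: "LAPR (\<lambda>\<zeta>. wlap u \<zeta> / w2 \<zeta>) W" by (rule LAPR_cong[OF LV g])
  have W0: "W w = 0" for w
    unfolding W_def lapW_def lapT_def by (simp add: field_simps)
  show ?thesis unfolding w2_biharmonic_def
    using LAPR_wlap[OF Lg] W0 by simp
qed

end
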